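(* Let $f:X\to\mathcal G$ be a function and $x_0\in\operatorname{dom} f$. The following are equivalent: (a) $f(x_0)=\inf f[X]$; (b) $\varphi_{f,z^*}(x_0)\le\varphi_{f,z^*}(x)$ for all $x\in X$, $z^*\in C^-\setminus\{0\}$; (c) $\varphi_{f,z^*}(x_0)\ominus\varphi_{f,z^*}(x)\le0$ for all $x\in X$, $z^*\in C^-\setminus\{0\}$; (d) $0\in f(x_0)\ominus f(x)$ for all $x\in X$; (e) for all $x\in X$, $z^*\in C^-\setminus\{0\}$: $\varphi_{f,z^*}(x_0)=-\infty$ or $0\le\varphi_{f,z^*}(x)\ominus\varphi_{f,z^*}(x_0)$. Each of these conditions implies (f): $0^+f(x_0)\supseteq f(x)\ominus f(x_0)$ for all $x\in X$.
   Context: $X$ real linear space, $Z$ real locally convex Hausdorff space with dual $Z^*$, $C\subseteq Z$ closed convex cone, $0\in C$, $C^-=\{z^*:z^*(c)\le0\ \forall c\in C\}$, $C^-\setminus\{0\}\ne\emptyset$. $\mathcal G=\{A\subseteq Z:A=\operatorname{cl}\operatorname{co}(A+C)\}$; $A\ominus B=\{z\in Z:B+\{z\}\subseteq A\}$; $0^+A=\{z:A+\{z\}\subseteq A\}$ for $A\ne\emptyset$, $0^+\emptyset=\emptyset$. $\operatorname{dom}f=\{x:f(x)\ne\emptyset\}$, $\inf f[X]=\operatorname{cl}\operatorname{co}\bigcup_{x\in X}f(x)$. On $\overline{\mathbb R}$: inf-addition $\dot+$ ($(-\infty)\dot+(+\infty)=+\infty$), $r\ominus s=\inf\{t\in\mathbb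 R:r\le s\dot+t\}$ ($\inf\emptyset=+\infty$). $\varphi_{f,z^*}(x)=\inf\{-z^*(z):z\in f(x)\}$ ($+\infty$ if $f(x)=\emptyset$). *)

theory Defs
  imports "HOL-Analysis.Analysis"
begin

text \<open>Real locally convex Hausdorff topological vector space structure on a type
  (Hausdorff via the sort t2_space).\<close>
definition lc_tvs :: "'z::{real_vector,topological_space} itself \<Rightarrow> bool" where
  "lc_tvs _ \<longleftrightarrow>
     continuous_on UNIV (\<lambda>p::'z \<times> 'z. fst p + snd p) \<and>
     continuous_on UNIV (\<lambda>p::real \<times> 'z. fst p *\<^sub>R snd p) \<and>
     (\<forall>U::'z set. open U \<and> 0 \<in> U \<longrightarrow> (\<exists>V. open V \<and> convex V \<and> 0 \<in> V \<and> V \<subseteq> U))"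

definition topdual :: "('z::{real_vector,topological_space} \<Rightarrow> real) set" where
  "topdual = {zs. linear zs \<and> continuous_on UNIV zs}"

definition negdual :: "'z::{real_vector,topological_space} set \<Rightarrow> ('z \<Rightarrow> real) set" where
  "negdual C = {zs \<in> topdual. \<forall>c\<in>C. zs c \<le> 0}"

definition setplus :: "'z::real_vector set \<Rightarrow> 'z set \<Rightarrow> 'z set" where
  "setplus A B = {a + b | a b. a \<in> A \<and> b \<in> B}"

definition GC :: "'z::{real_vector,topological_space} set \<Rightarrow> 'z set set" where
  "GC C = {A. A = closure (convex hull (setplus A C))}"

definition setminus_geom :: "'z::real_vector set \<Rightarrow> 'z set \<Rightarrow> 'z set" where
  "setminus_geom A B = {z. setplus B {z} \<subseteq> A}"

definition recc_cone :: "'z::real_vector set \<Rightarrow> 'z set" where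
  "recc_cone A = (if A = {} then {} else {z. setplus A {z} \<subseteq> A})"

definition sv_dom :: "('x \<Rightarrow> 'z set) \<Rightarrow> 'x set" where
  "sv_dom f = {x. f x \<noteq> {}}"

definition sv_inf :: "('x \<Rightarrow> 'z::{real_vector,topological_space} set) \<Rightarrow> 'z set" where
  "sv_inf f = closure (convex hull (\<Union>x. f x))"

definition inf_plus :: "ereal \<Rightarrow> ereal \<Rightarrow> ereal" where
  "inf_plus r s = (if r = \<infinity> \<or> s = \<infinity> then \<infinity> else r + s)"

definition ereal_minus_inf :: "ereal \<Rightarrow> ereal \<Rightarrow> ereal" where
  "ereal_minus_inf r s = Inf {ereal t | t. r \<le> inf_plus s (ereal t)}"

definition scal_phi :: "('x \<Rightarrow> 'z set) \<Rightarrow> ('z \<Rightarrow> real) \<Rightarrow> 'x \<Rightarrow> ereal" where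
  "scal_phi f zs x = Inf {ereal (- zs z) | z. z \<in> f x}"

end

theory Submission
  imports Defs
begin

lemma hahn_banach_aux:
  fixes p :: "'a::real_vector \<Rightarrow> real"
  assumes sub: "\<And>x y. p (x+y) \<le> p x + p y"
  and hom: "\<And>c x. c > 0 \<Longrightarrow> p (c *\<^sub>R x) = c * p x"
  and nn: "\<And>x. p x \<ge> 0"
  and x0: "p x0 \<ge> 1"
  shows "\<exists>L. linear L \<and> L x0 = 1 \<and> (\<forall>x. L x \<le> p x)"
proof -
  have p0: "p 0 = 0" using hom[of 2 0] by simp
  define G0 where "G0 = {(t *\<^sub>R x0, t) | t. True}"
  define good where "good G \<longleftrightarrow> G0 \<subseteq> G \<and>
     (\<forall>x a y b. (x,a)\<in>G \<longrightarrow> (y,b)\<in>G \<longrightarrow> (x+y,a+b)\<in>G) \<and>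
     (\<forall>x a c. (x,a)\<in>G \<longrightarrow> (c *\<^sub>R x, c*a) \<in> G) \<and>
     (\<forall>x a. (x,a)\<in>G \<longrightarrow> a \<le> p x)" for G
  have func: "a = b" if "good G" "(x,a)\<in>G" "(x,b)\<in>G" for G x a b
  proof -
    have "(-x, -b) \<in> G" "(-x,-a)\<in>G" using that unfolding good_def
      by (metis mult_minus1 scaleR_minus1_left)+
    then have "(x + -x, a + -b) \<in> G" "(x + -x, b + -a) \<in> G" using that unfolding good_def by blast+
    then have "a - b \<le> 0" "b - a \<le> 0" using that p0 unfolding good_def by fastforce+
    then show ?thesis by simp
  qed
  have goodG0: "good G0"
    unfolding good_def
  proof (intro conjI allI impI)
    fix x a y b assume "(x,a)\<in>G0" "(y,b)\<in>G0"
    then show "(x+y,a+b)\<in>G0" unfolding G0_def by (auto simp: scaleR_add_left)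
  next
    fix x a c assume "(x,a)\<in>G0"
    then show "(c *\<^sub>R x, c*a)\<in>G0" unfolding G0_def by auto
  next
    fix x a assume "(x,a)\<in>G0"
    then obtain t where t: "x = t *\<^sub>R x0" "a = t" unfolding G0_def by auto
    show "a \<le> p x"
    proof (cases "t > 0")
      case True
      then show ?thesis using t hom[of t x0] x0
        by (simp add: mult_le_cancel_left1)
    next
      case False
      then show ?thesis using t nn[of x] by simp
    qed
  qed simp
  have "\<exists>M\<in>{G. good G}. \<forall>X\<in>{G. good G}. M \<subseteq> X \<longrightarrow> X = M"
  proof (rule Zorn_Lemma2, intro ballI)
    fix Ch assume Ch: "Ch \<in> chains {G. good G}"
    show "\<exists>U\<in>{G. good G}. \<forall>X\<in>Ch. X \<subseteq> U"
    proof (cases "Ch = {}")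
      case True
      then show ?thesis using goodG0 by auto
    next
      case False
      have gCh: "\<And>X. X \<in> Ch \<Longrightarrow> good X" and ch: "\<And>X Y. X\<in>Ch \<Longrightarrow> Y\<in>Ch \<Longrightarrow> X \<subseteq> Y \<or> Y \<subseteq> X"
        using Ch unfolding chains_def chain_subset_def by auto
      have "good (\<Union>Ch)"
        unfolding good_def
      proof (intro conjI allI impI)
        show "G0 \<subseteq> \<Union>Ch" using False gCh unfolding good_def by blast
      next
        fix x a y b assume "(x,a)\<in>\<Union>Ch" "(y,b)\<in>\<Union>Ch"
        then obtain X Y where XY: "X\<in>Ch" "Y\<in>Ch" "(x,a)\<in>X" "(y,b)\<in>Y" by auto
        from ch[OF XY(1,2)] show "(x+y,a+b)\<in>\<Union>Ch"
        proof
          assume "X \<subseteq> Y" then show ?thesis using XY gCh[of Y] unfolding good_def by blast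
        next
          assume "Y \<subseteq> X" then show ?thesis using XY gCh[of X] unfolding good_def by blast
        qed
      next
        fix x a c assume "(x,a)\<in>\<Union>Ch"
        then show "(c *\<^sub>R x, c*a)\<in>\<Union>Ch" using gCh unfolding good_def by blast
      next
        fix x a assume "(x,a)\<in>\<Union>Ch"
        then show "a \<le> p x" using gCh unfolding good_def by blast
      qed
      then show ?thesis by auto
    qed
  qed
  then obtain M where gM: "good M" and maxM: "\<And>X. good X \<Longrightarrow> M \<subseteq> X \<Longrightarrow> X = M" by auto
  have Madd: "\<And>x a y b. (x,a)\<in>M \<Longrightarrow> (y,b)\<in>M \<Longrightarrow> (x+y,a+b)\<in>M"
   and Mscale: "\<And>x a c. (x,a)\<in>M \<Longrightarrow> (c *\<^sub>R x, c*a) \<in> M"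
   and Mdom: "\<And>x a. (x,a)\<in>M \<Longrightarrow> a \<le> p x" and MG0: "G0 \<subseteq> M"
    using gM unfolding good_def by blast+
  have M00: "(0,0) \<in> M" using MG0 unfolding G0_def by force
  have total: "\<exists>a. (y,a) \<in> M" for y
  proof (rule ccontr)
    assume ny: "\<not> (\<exists>a. (y,a) \<in> M)"
    define S where "S = {a - p (s - y) | s a. (s,a)\<in>M}"
    define c where "c = Sup S"
    have Sne: "S \<noteq> {}" using M00 unfolding S_def by auto
    have key: "a - p (s - y) \<le> p (s' + y) - a'" if "(s,a)\<in>M" "(s',a')\<in>M" for s a s' a'
    proof -
      have "a + a' \<le> p (s + s')" using Madd[OF that] Mdom by blast
      also have "\<dots> \<le> p (s - y) + p (s' + y)" using sub[of "s - y" "s' + y"] by simp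
      finally show ?thesis by simp
    qed
    have bdd: "bdd_above S" unfolding S_def bdd_above_def using key[OF _ M00] by auto
    have c_lo: "a - p (s - y) \<le> c" if "(s,a)\<in>M" for s a
      unfolding c_def by (rule cSup_upper[OF _ bdd]) (use that S_def in auto)
    have c_hi: "c \<le> p (s + y) - a" if "(s,a)\<in>M" for s a
      unfolding c_def by (rule cSup_least[OF Sne]) (use key that S_def in auto)
    define M' where "M' = {(s + t *\<^sub>R y, a + t*c) | s a t. (s,a)\<in>M}"
    have dom': "a + t*c \<le> p (s + t *\<^sub>R y)" if "(s,a)\<in>M" for s a t
    proof -
      consider "t = 0" | "t > 0" | "t < 0" by linarith
      then show ?thesis
      proof cases
        case 1 then show ?thesis using Mdom that by simp
      next
        case 2
        have m: "((1/t) *\<^sub>R s, (1/t)*a) \<in> M" using Mscale that by blast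
        have "c \<le> p ((1/t) *\<^sub>R s + y) - (1/t)*a" using c_hi[OF m] .
        then have "t*c \<le> t * (p ((1/t) *\<^sub>R s + y) - (1/t)*a)" using 2
          by (intro mult_left_mono) auto
        also have "\<dots> = t * p ((1/t) *\<^sub>R s + y) - a" using 2 by (simp add: right_diff_distrib)
        also have "t * p ((1/t) *\<^sub>R s + y) = p (t *\<^sub>R ((1/t) *\<^sub>R s + y))" using hom 2 by simp
        also have "t *\<^sub>R ((1/t) *\<^sub>R s + y) = s + t *\<^sub>R y" using 2 by (simp add: scaleR_add_right)
        finally show ?thesis by simp
      next
        case 3
        define u where "u = -t"
        have u: "u > 0" using 3 u_def by simp
        have m: "((1/u) *\<^sub>R s, (1/u)*a) \<in> M" using Mscale that by blast
        have "(1/u)*a - p ((1/u) *\<^sub>R s - y) \<le> c" using c_lo[OF m] .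
        then have "u * ((1/u)*a - p ((1/u) *\<^sub>R s - y)) \<le> u*c" using u by (simp add: mult_left_mono)
        then have "a - u * p ((1/u) *\<^sub>R s - y) \<le> u*c" using u by (simp add: right_diff_distrib)
        also have "u * p ((1/u) *\<^sub>R s - y) = p (u *\<^sub>R ((1/u) *\<^sub>R s - y))" using hom u by simp
        also have "u *\<^sub>R ((1/u) *\<^sub>R s - y) = s + t *\<^sub>R y" using u u_def by (simp add: scaleR_diff_right)
        finally show ?thesis using u_def by simp
      qed
    qed
    have "good M'" unfolding good_def
    proof (intro conjI allI impI)
      show "G0 \<subseteq> M'"
      proof
        fix g assume "g \<in> G0"
        then obtain x a where "g = (x,a)" "(x,a)\<in>M" using MG0 by (metis subsetD surj_pair)
        moreover have "(x + 0 *\<^sub>R y, a + 0*c) \<in> M'" unfolding M'_def using \<open>(x,a)\<in>M\<close> by blast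
        ultimately show "g \<in> M'" by simp
      qed
    next
      fix x a z b assume "(x,a)\<in>M'" "(z,b)\<in>M'"
      then obtain s1 a1 t1 s2 a2 t2 where h: "(s1,a1)\<in>M" "(s2,a2)\<in>M"
        "x = s1 + t1 *\<^sub>R y" "a = a1 + t1*c" "z = s2 + t2 *\<^sub>R y" "b = a2 + t2*c"
        unfolding M'_def by blast
      have "(s1+s2, a1+a2) \<in> M" using Madd h by blast
      moreover have "x + z = (s1+s2) + (t1+t2) *\<^sub>R y" "a + b = (a1+a2) + (t1+t2)*c"
        using h by (simp_all add: algebra_simps)
      ultimately show "(x+z, a+b) \<in> M'" unfolding M'_def by blast
    next
      fix x a k assume "(x,a)\<in>M'"
      then obtain s1 a1 t1 where h: "(s1,a1)\<in>M" "x = s1 + t1 *\<^sub>R y" "a = a1 + t1*c"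
        unfolding M'_def by blast
      have "(k *\<^sub>R s1, k*a1) \<in> M" using Mscale h by blast
      moreover have "k *\<^sub>R x = k *\<^sub>R s1 + (k*t1) *\<^sub>R y" "k*a = k*a1 + (k*t1)*c"
        using h by (simp_all add: algebra_simps)
      ultimately show "(k *\<^sub>R x, k*a) \<in> M'" unfolding M'_def by blast
    next
      fix x a assume "(x,a)\<in>M'"
      then show "a \<le> p x" unfolding M'_def using dom' by auto
    qed
    moreover have "M \<subseteq> M'"
    proof
      fix g assume "g \<in> M"
      then obtain x a where "g = (x,a)" "(x,a)\<in>M" by (metis surj_pair)
      moreover have "(x + 0 *\<^sub>R y, a + 0*c) \<in> M'" unfolding M'_def using \<open>(x,a)\<in>M\<close> by blast
      ultimately show "g \<in> M'" by simp
    qed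
    ultimately have "M' = M" using maxM by blast
    moreover have "(0 + 1 *\<^sub>R y, 0 + 1*c) \<in> M'" unfolding M'_def using M00 by blast
    then have "(y, c) \<in> M'" by simp
    ultimately show False using ny by auto
  qed
  define L where "L x = (SOME a. (x,a) \<in> M)" for x
  have LM: "(x, L x) \<in> M" for x unfolding L_def using total by (metis someI_ex)
  have "linear L"
  proof (rule linearI)
    fix x y show "L (x + y) = L x + L y" using func[OF gM LM Madd[OF LM LM]] .
  next
    fix r x show "L (r *\<^sub>R x) = r *\<^sub>R L x" using func[OF gM LM Mscale[OF LM]] by simp
  qed
  moreover have "L x0 = 1" using func[OF gM LM, of x0 1] MG0 unfolding G0_def by force
  moreover have "\<forall>x. L x \<le> p x" using Mdom LM by blast
  ultimately show ?thesis by blast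
qed

lemma emi_le0: "ereal_minus_inf r s \<le> 0 \<longleftrightarrow> r \<le> s"
proof (cases s)
  case PInf
  have "Inf {ereal t |t. r \<le> inf_plus s (ereal t)} \<le> ereal 0"
    by (rule Inf_lower) (auto simp: PInf inf_plus_def)
  then show ?thesis using PInf unfolding ereal_minus_inf_def by (simp add: zero_ereal_def)
next
  case MInf
  show ?thesis
  proof (cases "r = -\<infinity>")
    case True
    have "Inf {ereal t |t. r \<le> inf_plus s (ereal t)} \<le> ereal 0"
      by (rule Inf_lower) (auto simp: True)
    then show ?thesis using True unfolding ereal_minus_inf_def by (simp add: zero_ereal_def)
  next
    case False
    have "{ereal t |t. r \<le> inf_plus s (ereal t)} = {}" using False MInf by (auto simp: inf_plus_def)
    then show ?thesis using False MInf unfolding ereal_minus_inf_def by (simp add: top_ereal_def)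
  qed
next
  case (real b)
  have ip: "inf_plus s (ereal t) = ereal (b + t)" for t using real by (simp add: inf_plus_def)
  show ?thesis
  proof (cases "r \<le> s")
    case True
    have "Inf {ereal t |t. r \<le> inf_plus s (ereal t)} \<le> ereal 0"
      by (rule Inf_lower) (use True real ip in auto)
    then show ?thesis using True unfolding ereal_minus_inf_def by (simp add: zero_ereal_def)
  next
    case False
    show ?thesis
    proof (cases r)
      case PInf
      have "{ereal t |t. r \<le> inf_plus s (ereal t)} = {}" using PInf ip by auto
      then have "ereal_minus_inf r s = \<infinity>" unfolding ereal_minus_inf_def by (simp add: top_ereal_def)
      then show ?thesis using False by simp
    next
      case MInf then show ?thesis using False by simp
    next
      case (real a)
      have ab: "a > b" using False real \<open>s = ereal b\<close> by simp
      have "ereal (a - b) \<le> Inf {ereal t |t. r \<le> inf_plus s (ereal t)}"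
        by (rule Inf_greatest) (use real ip in auto)
      moreover have "0 < ereal (a - b)" using ab by (simp add: zero_ereal_def)
      ultimately have "0 < ereal_minus_inf r s" unfolding ereal_minus_inf_def
        using less_le_trans by blast
      then show ?thesis using False by simp
    qed
  qed
qed

lemma emi_ge0: "s \<noteq> \<infinity> \<Longrightarrow> (s = -\<infinity> \<or> 0 \<le> ereal_minus_inf r s) \<longleftrightarrow> s \<le> r"
proof (cases s)
  case (real b)
  have ip: "inf_plus s (ereal t) = ereal (b + t)" for t using real by (simp add: inf_plus_def)
  show ?thesis
  proof (cases "s \<le> r")
    case True
    have "ereal 0 \<le> Inf {ereal t |t. r \<le> inf_plus s (ereal t)}"
    proof (rule Inf_greatest)
      fix x assume "x \<in> {ereal t |t. r \<le> inf_plus s (ereal t)}"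
      then obtain t where "x = ereal t" "r \<le> ereal (b+t)" using ip by auto
      then have "ereal b \<le> ereal (b+t)" using True real order_trans[of "ereal b" r "ereal (b+t)"] \<open>r \<le> ereal (b+t)\<close> by simp
      then show "ereal 0 \<le> x" using \<open>x = ereal t\<close> by simp
    qed
    then show ?thesis using True real unfolding ereal_minus_inf_def by (simp add: zero_ereal_def)
  next
    case False
    then obtain a where a: "r = ereal a \<or> r = -\<infinity>" "r < s" by (cases r) auto
    have "\<exists>t<0. r \<le> inf_plus s (ereal t)"
    proof (cases "r = -\<infinity>")
      case True then show ?thesis by (intro exI[of _ "-1"]) auto
    next
      case F: False
      then have "r = ereal a" using a by auto
      then show ?thesis using a(2) real ip by (intro exI[of _ "a - b"]) auto
    qed
    then obtain t where t: "t < 0" "r \<le> inf_plus s (ereal t)" by auto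
    have "ereal_minus_inf r s \<le> ereal t" unfolding ereal_minus_inf_def
      by (rule Inf_lower) (use t in auto)
    then have "ereal_minus_inf r s < 0" using t by (simp add: zero_ereal_def le_less_trans)
    then show ?thesis using False real by auto
  qed
qed auto

lemma lc_cont_affine:
  assumes lc: "lc_tvs TYPE('z::{real_vector,topological_space})"
  shows "continuous_on UNIV (\<lambda>x::'z. r *\<^sub>R x + c)"
proof -
  have add: "continuous_on UNIV (\<lambda>p::'z \<times> 'z. fst p + snd p)"
   and sc: "continuous_on UNIV (\<lambda>p::real \<times> 'z. fst p *\<^sub>R snd p)"
    using lc unfolding lc_tvs_def by auto
  have cp: "continuous_on UNIV (\<lambda>x::'z. (r, x))"
    by (intro continuous_on_Pair continuous_on_const continuous_on_id)
  have s1: "continuous_on UNIV (\<lambda>x::'z. r *\<^sub>R x)"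
    using continuous_on_compose2[OF sc cp] by simp
  have "continuous_on UNIV (\<lambda>x::'z. (r *\<^sub>R x, c))"
    by (intro continuous_on_Pair s1 continuous_on_const)
  from continuous_on_compose2[OF add this] show ?thesis by simp
qed

lemma lc_open_affine:
  assumes lc: "lc_tvs TYPE('z::{real_vector,topological_space})" and "open S"
  shows "open {x::'z. r *\<^sub>R x + c \<in> S}"
proof -
  have "{x::'z. r *\<^sub>R x + c \<in> S} = (\<lambda>x. r *\<^sub>R x + c) -` S" by auto
  then show ?thesis using open_vimage[OF assms(2) lc_cont_affine[OF lc]] by simp
qed

lemma lc_absorb:
  assumes lc: "lc_tvs TYPE('z::{real_vector,topological_space})" and "open W" "0 \<in> W"
  shows "\<exists>e>0. \<forall>s. \<bar>s\<bar> < e \<longrightarrow> s *\<^sub>R (x::'z) \<in> W"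
proof -
  have sc: "continuous_on UNIV (\<lambda>p::real \<times> 'z. fst p *\<^sub>R snd p)"
    using lc unfolding lc_tvs_def by auto
  have cp: "continuous_on UNIV (\<lambda>s::real. (s, x))"
    by (intro continuous_on_Pair continuous_on_const continuous_on_id)
  have "continuous_on UNIV (\<lambda>s::real. s *\<^sub>R x)"
    using continuous_on_compose2[OF sc cp] by simp
  then have "open ((\<lambda>s::real. s *\<^sub>R x) -` W)" using open_vimage[OF assms(2)] by blast
  moreover have "0 \<in> (\<lambda>s::real. s *\<^sub>R x) -` W" using assms by simp
  ultimately obtain e where "e > 0" "\<forall>y. dist y 0 < e \<longrightarrow> y \<in> (\<lambda>s::real. s *\<^sub>R x) -` W"
    unfolding open_dist by blast
  then show ?thesis by (auto simp: dist_real_def)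
qed

lemma lc_cont_linear:
  assumes lc: "lc_tvs TYPE('z::{real_vector,topological_space})"
    and lin: "linear (L::'z \<Rightarrow> real)" and N: "open N" "0 \<in> N" and bd: "\<And>x. x \<in> N \<Longrightarrow> \<bar>L x\<bar> \<le> 1"
  shows "continuous_on UNIV L"
  unfolding continuous_on_topological
proof (intro ballI allI impI)
  fix x B assume B: "open B" "L x \<in> B"
  then obtain e where e: "e > 0" "\<And>y. dist y (L x) < e \<Longrightarrow> y \<in> B" unfolding open_dist by blast
  define A where "A = {y. (2/e) *\<^sub>R y + (- ((2/e) *\<^sub>R x)) \<in> N}"
  have "open A" unfolding A_def by (rule lc_open_affine[OF lc N(1)])
  moreover have "x \<in> A" unfolding A_def using N by simp
  moreover have "L y \<in> B" if "y \<in> A" for y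
  proof -
    have "\<bar>L ((2/e) *\<^sub>R y + (- ((2/e) *\<^sub>R x)))\<bar> \<le> 1" using bd that unfolding A_def by auto
    also have "L ((2/e) *\<^sub>R y + (- ((2/e) *\<^sub>R x))) = L ((2/e) *\<^sub>R y) - L ((2/e) *\<^sub>R x)"
      using linear_diff[OF lin, of "(2/e) *\<^sub>R y" "(2/e) *\<^sub>R x"] by simp
    also have "\<dots> = (2/e) * (L y - L x)"
      using linear_scale[OF lin, of "2/e" y] linear_scale[OF lin, of "2/e" x] by (simp add: right_diff_distrib)
    finally have h: "\<bar>(2/e) * (L y - L x)\<bar> \<le> 1" .
    have "\<bar>(2/e) * (L y - L x)\<bar> = (2/e) * \<bar>L y - L x\<bar>" using e
      by (subst abs_mult) (simp add: abs_of_pos)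
    then have "(2/e) * \<bar>L y - L x\<bar> \<le> 1" using h by simp
    then have "\<bar>L y - L x\<bar> \<le> e/2" using e by (simp add: field_simps)
    then show ?thesis using e by (intro e(2)) (simp add: dist_real_def)
  qed
  ultimately show "\<exists>A. open A \<and> x \<in> A \<and> (\<forall>y\<in>UNIV. y \<in> A \<longrightarrow> L y \<in> B)" by blast
qed

lemma lc_separate:
  assumes lc: "lc_tvs TYPE('z::{real_vector,topological_space})"
   and A: "closed A" "convex A" "a0 \<in> A" and z: "z \<notin> A"
  shows "\<exists>L::'z\<Rightarrow>real. linear L \<and> continuous_on UNIV L \<and> (\<exists>e>0. \<forall>a\<in>A. L z + e \<le> L a)"
proof -
  have "open {v::'z. 1 *\<^sub>R v + z \<in> -A}" using lc_open_affine[OF lc open_Compl[OF A(1)], of 1 z] by simp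
  moreover have "0 \<in> {v::'z. 1 *\<^sub>R v + z \<in> -A}" using z by simp
  ultimately obtain V where V: "open V" "convex V" "0 \<in> V" "V \<subseteq> {v::'z. 1 *\<^sub>R v + z \<in> -A}"
    using lc unfolding lc_tvs_def by meson
  define W where "W = {v + (a0 - a) | v a. v \<in> V \<and> a \<in> A}"
  have Weq: "W = (\<Union>a\<in>A. {w. 1 *\<^sub>R w + (-(a0 - a)) \<in> V})"
  proof (intro set_eqI iffI)
    fix x assume "x \<in> W"
    then obtain v a where "v \<in> V" "a \<in> A" "x = v + (a0 - a)" unfolding W_def by blast
    then have "1 *\<^sub>R x + (-(a0 - a)) \<in> V" by simp
    then show "x \<in> (\<Union>a\<in>A. {w. 1 *\<^sub>R w + (-(a0 - a)) \<in> V})" using \<open>a \<in> A\<close> by blast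
  next
    fix x assume "x \<in> (\<Union>a\<in>A. {w. 1 *\<^sub>R w + (-(a0 - a)) \<in> V})"
    then obtain a where "a \<in> A" "x + (-(a0 - a)) \<in> V" by auto
    moreover have "x = (x + (-(a0 - a))) + (a0 - a)" by simp
    ultimately show "x \<in> W" unfolding W_def by blast
  qed
  moreover have "open (\<Union>a\<in>A. {w. 1 *\<^sub>R w + (-(a0 - a)) \<in> V})"
    by (intro open_UN ballI lc_open_affine[OF lc V(1)])
  ultimately have Wopen: "open W" by metis
  have Wconv: "convex W"
  proof (rule convexI)
    fix x y :: 'z and u w :: real assume h: "x \<in> W" "y \<in> W" "0 \<le> u" "0 \<le> w" "u + w = 1"
    then obtain v1 a1 v2 a2 where hh: "v1 \<in> V" "a1 \<in> A" "v2 \<in> V" "a2 \<in> A"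
      "x = v1 + (a0 - a1)" "y = v2 + (a0 - a2)" unfolding W_def by blast
    have "u *\<^sub>R x + w *\<^sub>R y = (u *\<^sub>R v1 + w *\<^sub>R v2) + ((u + w) *\<^sub>R a0 - (u *\<^sub>R a1 + w *\<^sub>R a2))"
      unfolding hh by (simp add: algebra_simps)
    also have "\<dots> = (u *\<^sub>R v1 + w *\<^sub>R v2) + (a0 - (u *\<^sub>R a1 + w *\<^sub>R a2))" using h by simp
    finally show "u *\<^sub>R x + w *\<^sub>R y \<in> W" unfolding W_def
      using convexD[OF V(2) hh(1,3) h(3,4,5)] convexD[OF A(2) hh(2,4) h(3,4,5)] by blast
  qed
  have W0: "0 \<in> W" unfolding W_def using V(3) A(3) by force
  define x0 where "x0 = a0 - z"
  have x0W: "x0 \<notin> W"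
  proof
    assume "x0 \<in> W"
    then obtain v a where "v \<in> V" "a \<in> A" "a0 - z = v + (a0 - a)" unfolding W_def x0_def by blast
    then have "a = 1 *\<^sub>R v + z" by (simp add: algebra_simps)
    then show False using V(4) \<open>v \<in> V\<close> \<open>a \<in> A\<close> by auto
  qed
  define T where "T x = {t::real. t > 0 \<and> (1/t) *\<^sub>R x \<in> W}" for x
  define p where "p x = Inf (T x)" for x
  have Tne: "T x \<noteq> {}" for x
  proof -
    obtain e where e: "e > 0" "\<forall>s. \<bar>s\<bar> < e \<longrightarrow> s *\<^sub>R x \<in> W" using lc_absorb[OF lc Wopen W0] by blast
    then have "2/e \<in> T x" unfolding T_def by auto
    then show ?thesis by auto
  qed
  have Tbdd: "bdd_below (T x)" for x unfolding T_def bdd_below_def by (auto intro: less_imp_le)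
  have pnn: "0 \<le> p x" for x unfolding p_def by (rule cInf_greatest[OF Tne]) (auto simp: T_def)
  have pW: "p x \<le> 1" if "x \<in> W" for x unfolding p_def by (rule cInf_lower[OF _ Tbdd]) (use that in \<open>auto simp: T_def\<close>)
  have plt: "x \<in> W" if lt: "p x < 1" for x
  proof -
    obtain t where t: "t \<in> T x" "t < 1" using cInf_lessD[OF Tne[of x] lt[unfolded p_def]] by blast
    then have t0: "t > 0" "(1/t) *\<^sub>R x \<in> W" unfolding T_def by auto
    have "t *\<^sub>R ((1/t) *\<^sub>R x) + (1 - t) *\<^sub>R 0 \<in> W"
      by (rule convexD[OF Wconv t0(2) W0]) (use t t0 in auto)
    then show ?thesis using t0 by simp
  qed
  have phom_le: "p (c *\<^sub>R x) \<le> c * p x" if c: "c > 0" for c x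
  proof -
    have "p (c *\<^sub>R x) / c \<le> p x" unfolding p_def
    proof (rule cInf_greatest[OF Tne])
      fix t assume "t \<in> T x"
      then have "c * t \<in> T (c *\<^sub>R x)" using c unfolding T_def by auto
      then have "Inf (T (c *\<^sub>R x)) \<le> c * t" by (rule cInf_lower[OF _ Tbdd])
      then show "Inf (T (c *\<^sub>R x)) / c \<le> t" using c by (simp add: field_simps)
    qed
    then show ?thesis using c by (simp add: field_simps)
  qed
  have phom: "p (c *\<^sub>R x) = c * p x" if c: "c > 0" for c x
  proof -
    have "p x = p ((1/c) *\<^sub>R (c *\<^sub>R x))" using c by simp
    also have "\<dots> \<le> (1/c) * p (c *\<^sub>R x)" using phom_le[of "1/c" "c *\<^sub>R x"] c by simp
    finally have "c * p x \<le> p (c *\<^sub>R x)" using c by (simp add: field_simps)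
    then show ?thesis using phom_le[OF c, of x] by linarith
  qed
  have psub: "p (x + y) \<le> p x + p y" for x y
  proof -
    have st: "p (x + y) \<le> s + t" if "s \<in> T x" "t \<in> T y" for s t
    proof -
      have s: "s > 0" "(1/s) *\<^sub>R x \<in> W" and t: "t > 0" "(1/t) *\<^sub>R y \<in> W" using that unfolding T_def by auto
      have "(s/(s+t)) *\<^sub>R ((1/s) *\<^sub>R x) + (t/(s+t)) *\<^sub>R ((1/t) *\<^sub>R y) \<in> W"
      proof (rule convexD[OF Wconv s(2) t(2)])
        show "s/(s+t) + t/(s+t) = 1" using s t by (simp add: add_divide_distrib[symmetric])
      qed (use s t in auto)
      moreover have "(s/(s+t)) *\<^sub>R ((1/s) *\<^sub>R x) + (t/(s+t)) *\<^sub>R ((1/t) *\<^sub>R y) = (1/(s+t)) *\<^sub>R (x + y)"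
        using s t by (simp add: scaleR_add_right)
      ultimately have "s + t \<in> T (x + y)" using s t unfolding T_def by auto
      then show ?thesis unfolding p_def by (rule cInf_lower[OF _ Tbdd])
    qed
    have "p (x + y) - t \<le> p x" if "t \<in> T y" for t
      unfolding p_def[of x] by (rule cInf_greatest[OF Tne]) (use st that in force)
    then have "p (x + y) - p x \<le> p y" unfolding p_def[of y]
      by (intro cInf_greatest[OF Tne]) force
    then show ?thesis by simp
  qed
  have px0: "1 \<le> p x0" using plt x0W by force
  obtain L where L: "linear L" "L x0 = 1" "\<And>x. L x \<le> p x"
    using hahn_banach_aux[of p x0] psub phom pnn px0 by blast
  define N where "N = W \<inter> {x. (-1) *\<^sub>R x + 0 \<in> W}"
  have Nopen: "open N" unfolding N_def by (intro open_Int Wopen lc_open_affine[OF lc Wopen])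
  have N0: "0 \<in> N" unfolding N_def using W0 by simp
  have "\<bar>L x\<bar> \<le> 1" if "x \<in> N" for x
  proof -
    have "L x \<le> 1" using L(3)[of x] pW[of x] that unfolding N_def by auto
    moreover have "L (-x) \<le> 1" using L(3)[of "-x"] pW[of "-x"] that unfolding N_def by auto
    moreover have "L (-x) = - L x" using linear_neg[OF L(1)] by simp
    ultimately show ?thesis by auto
  qed
  then have Lc: "continuous_on UNIV L" using lc_cont_linear[OF lc L(1) Nopen N0] by blast
  obtain e' where e': "e' > 0" "\<forall>s. \<bar>s\<bar> < e' \<longrightarrow> s *\<^sub>R x0 \<in> V" using lc_absorb[OF lc V(1,3)] by blast
  define e where "e = e'/2"
  have e: "e > 0" "e *\<^sub>R x0 \<in> V" using e' unfolding e_def by auto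
  have "L z + e \<le> L a" if "a \<in> A" for a
  proof -
    have "e *\<^sub>R x0 + (a0 - a) \<in> W" unfolding W_def using e that by blast
    then have "L (e *\<^sub>R x0 + (a0 - a)) \<le> 1" using L(3) pW order_trans by blast
    moreover have "L (e *\<^sub>R x0 + (a0 - a)) = e * L x0 + L a0 - L a"
      using linear_add[OF L(1)] linear_diff[OF L(1)] linear_scale[OF L(1)] by simp
    moreover have "L x0 = L a0 - L z" unfolding x0_def using linear_diff[OF L(1)] by simp
    ultimately show ?thesis using L(2) by simp
  qed
  then show ?thesis using L(1) Lc e(1) by blast
qed

theorem mainTheorem18:
  fixes C :: "'z::{real_vector,t2_space} set"
    and f :: "'x::real_vector \<Rightarrow> 'z set"
    and x0 :: 'x
  assumes "lc_tvs TYPE('z)"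
    and "closed C" and "convex C" and "cone C" and "0 \<in> C"
    and "negdual C - {\<lambda>_. 0} \<noteq> {}"
    and "\<forall>x. f x \<in> GC C"
    and "x0 \<in> sv_dom f"
  shows "((f x0 = sv_inf f) \<longleftrightarrow>
           (\<forall>x. \<forall>zs \<in> negdual C - {\<lambda>_. 0}. scal_phi f zs x0 \<le> scal_phi f zs x))
       \<and> ((f x0 = sv_inf f) \<longleftrightarrow>
           (\<forall>x. \<forall>zs \<in> negdual C - {\<lambda>_. 0}.
              ereal_minus_inf (scal_phi f zs x0) (scal_phi f zs x) \<le> 0))
       \<and> ((f x0 = sv_inf f) \<longleftrightarrow> (\<forall>x. 0 \<in> setminus_geom (f x0) (f x)))
       \<and> ((f x0 = sv_inf f) \<longleftrightarrow>
           (\<forall>x. \<forall>zs \<in> negdual C - {\<lambda>_. 0}.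
              scal_phi f zs x0 = -\<infinity> \<or>
              0 \<le> ereal_minus_inf (scal_phi f zs x) (scal_phi f zs x0)))
       \<and> ((f x0 = sv_inf f) \<longrightarrow>
           (\<forall>x. setminus_geom (f x) (f x0) \<subseteq> recc_cone (f x0)))"
proof -
  note lc = assms(1)
  have G: "f x = closure (convex hull (setplus (f x) C))" for x using assms(7) unfolding GC_def by auto
  have sp0: "S \<subseteq> setplus S C" for S unfolding setplus_def using assms(5) by force
  have spsub: "setplus (f x) C \<subseteq> f x" for x
  proof -
    have "setplus (f x) C \<subseteq> convex hull (setplus (f x) C)" by (rule hull_subset)
    also have "\<dots> \<subseteq> closure (convex hull (setplus (f x) C))" by (rule closure_subset)
    also have "\<dots> = f x" by (rule G[symmetric])
    finally show ?thesis .
  qed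
  have cl: "closed (f x)" for x by (subst G[of x]) (rule closed_closure)
  have cv: "convex (f x)" for x
  proof -
    have "convex hull (f x) \<subseteq> convex hull (setplus (f x) C)" by (rule hull_mono[OF sp0])
    also have "\<dots> \<subseteq> closure (convex hull (setplus (f x) C))" by (rule closure_subset)
    also have "\<dots> = f x" by (rule G[symmetric])
    finally have "convex hull (f x) = f x" by (rule subset_antisym[OF _ hull_subset])
    then show ?thesis using convex_convex_hull[of "f x"] by simp
  qed
  obtain a0 where a0: "a0 \<in> f x0" using assms(8) unfolding sv_dom_def by auto
  have dd: "(\<forall>x. 0 \<in> setminus_geom (f x0) (f x)) \<longleftrightarrow> (\<forall>x. f x \<subseteq> f x0)"
    unfolding setminus_geom_def setplus_def by auto
  have ad: "(f x0 = sv_inf f) \<longleftrightarrow> (\<forall>x. f x \<subseteq> f x0)"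
  proof
    assume h: "f x0 = sv_inf f"
    show "\<forall>x. f x \<subseteq> f x0"
    proof
      fix x
      have "f x \<subseteq> (\<Union>x. f x)" by auto
      also have "\<dots> \<subseteq> convex hull (\<Union>x. f x)" by (rule hull_subset)
      also have "\<dots> \<subseteq> sv_inf f" unfolding sv_inf_def by (rule closure_subset)
      finally show "f x \<subseteq> f x0" using h by simp
    qed
  next
    assume h: "\<forall>x. f x \<subseteq> f x0"
    then have "(\<Union>x. f x) = f x0" by auto
    then show "f x0 = sv_inf f" unfolding sv_inf_def
      using hull_same[of convex "f x0", OF cv[of x0]] closure_closed[OF cl[of x0]] by simp
  qed
  have db: "(\<forall>x. f x \<subseteq> f x0) \<longleftrightarrow>
     (\<forall>x. \<forall>zs \<in> negdual C - {\<lambda>_. 0}. scal_phi f zs x0 \<le> scal_phi f zs x)"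
  proof
    assume h: "\<forall>x. f x \<subseteq> f x0"
    show "\<forall>x. \<forall>zs \<in> negdual C - {\<lambda>_. 0}. scal_phi f zs x0 \<le> scal_phi f zs x"
      unfolding scal_phi_def by (intro allI ballI Inf_superset_mono) (use h in blast)
  next
    assume h: "\<forall>x. \<forall>zs \<in> negdual C - {\<lambda>_. 0}. scal_phi f zs x0 \<le> scal_phi f zs x"
    show "\<forall>x. f x \<subseteq> f x0"
    proof (rule ccontr)
      assume "\<not> (\<forall>x. f x \<subseteq> f x0)"
      then obtain x z where z: "z \<in> f x" "z \<notin> f x0" by auto
      obtain L :: "'z \<Rightarrow> real" where L0: "linear L" "continuous_on UNIV L" "\<exists>e>0. \<forall>a\<in>f x0. L z + e \<le> L a"
        using lc_separate[OF lc cl[of x0] cv[of x0] a0 z(2)] by blast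
      obtain e where e: "e > 0" "\<forall>a\<in>f x0. L z + e \<le> L a" using L0(3) by blast
      have L: "linear L" "continuous_on UNIV L" "e > 0" "\<And>a. a \<in> f x0 \<Longrightarrow> L z + e \<le> L a"
        using L0(1,2) e by auto
      define zs where "zs = (\<lambda>v. - L v)"
      have "linear zs" unfolding zs_def
        by (rule linearI) (simp_all add: linear_add[OF L(1)] linear_scale[OF L(1)])
      moreover have "continuous_on UNIV zs" unfolding zs_def by (intro continuous_on_minus L(2))
      moreover have "zs c \<le> 0" if c: "c \<in> C" for c
      proof (rule ccontr)
        assume "\<not> zs c \<le> 0"
        then have Lc: "L c < 0" unfolding zs_def by simp
        define t where "t = (L a0 - L z) / (- L c)"
        have t0: "t \<ge> 0" unfolding t_def using L(4)[OF a0] L(3) Lc by (simp add: divide_nonneg_neg)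
        have "t *\<^sub>R c \<in> C" using assms(4) c t0 unfolding cone_def by blast
        then have "a0 + t *\<^sub>R c \<in> setplus (f x0) C" unfolding setplus_def using a0 by blast
        then have "a0 + t *\<^sub>R c \<in> f x0" using spsub by blast
        then have "L z + e \<le> L (a0 + t *\<^sub>R c)" by (rule L(4))
        also have "L (a0 + t *\<^sub>R c) = L a0 + t * L c" using linear_add[OF L(1)] linear_scale[OF L(1)] by simp
        also have "t * L c = - (L a0 - L z)" unfolding t_def using Lc by simp
        finally show False using L(3) by simp
      qed
      ultimately have zsC: "zs \<in> negdual C" unfolding negdual_def topdual_def by blast
      have "zs \<noteq> (\<lambda>_. 0)"
      proof
        assume "zs = (\<lambda>_. 0)"
        then have "- L z = 0" "- L a0 = 0" unfolding zs_def by (auto dest: fun_cong)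
        then have "L z = 0" "L a0 = 0" by simp_all
        then show False using L(4)[OF a0] L(3) by simp
      qed
      with zsC have zsin: "zs \<in> negdual C - {\<lambda>_. 0}" by simp
      have "ereal (L z + e) \<le> scal_phi f zs x0" unfolding scal_phi_def zs_def
        by (rule Inf_greatest) (use L(4) in auto)
      moreover have "scal_phi f zs x \<le> ereal (L z)" unfolding scal_phi_def zs_def
        by (rule Inf_lower) (use z in auto)
      moreover have "scal_phi f zs x0 \<le> scal_phi f zs x" using h zsin by blast
      ultimately have "ereal (L z + e) \<le> ereal (L z)" by (metis order_trans)
      then show False using L(3) by simp
    qed
  qed
  have fin: "scal_phi f zs x0 \<noteq> \<infinity>" for zs
  proof -
    have "scal_phi f zs x0 \<le> ereal (- zs a0)" unfolding scal_phi_def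
      by (rule Inf_lower) (use a0 in auto)
    then show ?thesis by auto
  qed
  have bc: "(\<forall>x. \<forall>zs \<in> negdual C - {\<lambda>_. 0}. scal_phi f zs x0 \<le> scal_phi f zs x) \<longleftrightarrow>
     (\<forall>x. \<forall>zs \<in> negdual C - {\<lambda>_. 0}.
              ereal_minus_inf (scal_phi f zs x0) (scal_phi f zs x) \<le> 0)"
    by (simp add: emi_le0)
  have be: "(\<forall>x. \<forall>zs \<in> negdual C - {\<lambda>_. 0}. scal_phi f zs x0 \<le> scal_phi f zs x) \<longleftrightarrow>
     (\<forall>x. \<forall>zs \<in> negdual C - {\<lambda>_. 0}.
              scal_phi f zs x0 = -\<infinity> \<or>
              0 \<le> ereal_minus_inf (scal_phi f zs x) (scal_phi f zs x0))"
    using emi_ge0[OF fin] by simp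
  have ff: "(\<forall>x. f x \<subseteq> f x0) \<longrightarrow> (\<forall>x. setminus_geom (f x) (f x0) \<subseteq> recc_cone (f x0))"
  proof (intro impI allI subsetI)
    fix x w assume h: "\<forall>x. f x \<subseteq> f x0" and w: "w \<in> setminus_geom (f x) (f x0)"
    then have "setplus (f x0) {w} \<subseteq> f x0" unfolding setminus_geom_def by blast
    then show "w \<in> recc_cone (f x0)" unfolding recc_cone_def using a0 by auto
  qed
  have ff': "(f x0 = sv_inf f) \<longrightarrow> (\<forall>x. setminus_geom (f x) (f x0) \<subseteq> recc_cone (f x0))"
    using ff unfolding ad .
  show ?thesis
    apply (rule conjI, rule trans[OF ad db])
    apply (rule conjI, rule trans[OF trans[OF ad db] bc])
    apply (rule conjI, rule trans[OF ad dd[symmetric]])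
    apply (rule conjI, rule trans[OF trans[OF ad db] be])
    apply (rule ff')
    done
qed

end
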